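(* For each $n\ge1$ and $\epsilon\ge0$, the set $D^\epsilon_n=\{\vec w\in\mathcal{W}^n:N^\epsilon_n(\vec w)\ne\emptyset\}$ is closed. Moreover, there exists a universally measurable map $\hat x:D^\epsilon_n\to\mathcal{X}^n$ such that $\hat x(\vec w)\in N^\epsilon_n(\vec w)$ for each $\vec w\in D^\epsilon_n$.
   Context: Standing assumptions: $\mathcal{X}$ compact metric space, $\mathcal{W}$ complete separable metric space; $\mathcal{P}(S)$ = Borel probability measures on $S$ with the weak topology. $\mathcal{C}$ maps $w$ to a nonempty closed $\mathcal{C}(w)\subset\mathcal{X}$, continuous in the sense that $\mathrm{Gr}(\mathcal{C})=\{(w,x):x\in\mathcal{C}(w)\}$ is closed and whenever $w_n\to w$, $x\in\mathcal{C}(w)$ there exist $n_k$, $x_{n_k}\in\mathcal{C}(w_{n_k})$ with $x_{n_k}\to x$. $F:\mathcal{P}(\mathcal{W}\times\mathcal{X})\times\mathcal{W}\times\mathcal{X}\to\mathbb{R}$ bounded continuous. $N^\epsilon_n(w_1,\dots,w_n)$ is the set of $\epsilon$-Nash equilibria with type vector $(w_1,\dots,w_n)$, i.e. of $\vec x=(x_1,\dots,x_n)\in\mathcal{X}^n$ with $x_i\in\mathcal{C}(w_i)$ and, writing $m=\frac1n\sum_k\delta_{(w_k,x_k)}$, $F(m,w_i,x_i)-\inf_{y\in\mathcal{C}(w_i)}F(m+\frac1n(\delta_{(w_i,y)}-\delta_{(w_i,x_i)}),w_i,y)\le\epsilon$ for all $i$. *)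

theory Defs
  imports "HOL-Probability.Probability"
begin

definition prob_measures :: "('a::topological_space) measure set" where
  "prob_measures = {M. prob_space M \<and> sets M = sets borel}"

definition weak_topology :: "('a::topological_space) measure topology" where
  "weak_topology = topology_generated_by
     {{M \<in> prob_measures. (\<integral>z. f z \<partial>M) \<in> U} | (f :: 'a \<Rightarrow> real) U.
        continuous_on UNIV f \<and> bounded (range f) \<and> open U}"

definition empirical :: "('w::topological_space) ^ 'n \<Rightarrow> ('x::topological_space) ^ 'n \<Rightarrow> ('w \<times> 'x) measure" where
  "empirical w x = measure_of UNIV (sets borel)
     (\<lambda>A. ennreal (real (card {k. (w $ k, x $ k) \<in> A}) / real CARD('n)))"

definition vupd :: "'x ^ 'n \<Rightarrow> 'n \<Rightarrow> 'x \<Rightarrow> 'x ^ 'n" where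
  "vupd x i y = (\<chi> j. if j = i then y else x $ j)"

text \<open>The set of epsilon-Nash equilibria N^eps_n(w).  The deviation measure
  m + (1/n)(delta_(w_i,y) - delta_(w_i,x_i)) is the empirical measure of the profile
  with x_i replaced by y.\<close>
definition nash :: "real \<Rightarrow> ('w \<Rightarrow> 'x set) \<Rightarrow> (('w \<times> 'x) measure \<Rightarrow> 'w \<Rightarrow> 'x \<Rightarrow> real)
    \<Rightarrow> ('w::topological_space) ^ 'n \<Rightarrow> (('x::topological_space) ^ 'n) set" where
  "nash eps C F w = {x. (\<forall>i. x $ i \<in> C (w $ i)) \<and>
     (\<forall>i. F (empirical w x) (w $ i) (x $ i)
          - (INF y\<in>C (w $ i). F (empirical w (vupd x i y)) (w $ i) y) \<le> eps)}"

definition nash_domain :: "real \<Rightarrow> ('w \<Rightarrow> ('x::topological_space) set) \<Rightarrow> (('w \<times> 'x) measure \<Rightarrow> 'w \<Rightarrow> 'x \<Rightarrow> real)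
    \<Rightarrow> (('w::topological_space) ^ 'n) set" where
  "nash_domain eps C F = {w. nash eps C F w \<noteq> {}}"

definition univ_measurable_sets :: "('a::topological_space) set \<Rightarrow> 'a set set" where
  "univ_measurable_sets D = {A. A \<subseteq> D \<and>
     (\<forall>M. prob_space M \<and> sets M = sets (restrict_space borel D) \<longrightarrow> A \<in> sets (completion M))}"

definition univ_measurable_on :: "('a::topological_space) set \<Rightarrow> ('a \<Rightarrow> 'b::topological_space) \<Rightarrow> bool" where
  "univ_measurable_on D h \<longleftrightarrow> (\<forall>B \<in> sets borel. {v \<in> D. h v \<in> B} \<in> univ_measurable_sets D)"

end

theory Submission
  imports Defs
begin

lemma vec_subseq_aux:
  fixes f :: "nat \<Rightarrow> 'x::metric_space ^ 'n"
  assumes cX: "compact (UNIV::'x set)" and D: "finite D"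
  shows "\<exists>l r. strict_mono r \<and> (\<forall>i\<in>D. (\<lambda>k. f (r k) $ i) \<longlonglongrightarrow> l $ i)"
  using D
proof (induction D rule: finite_induct)
  case empty
  then show ?case using strict_mono_id by blast
next
  case (insert i D)
  then obtain l r where r: "strict_mono r" and lr: "\<forall>j\<in>D. (\<lambda>k. f (r k) $ j) \<longlonglongrightarrow> l $ j" by blast
  have "seq_compact (UNIV::'x set)" using cX compact_eq_seq_compact_metric by blast
  then obtain a s where s: "strict_mono s" and as: "((\<lambda>k. f (r k) $ i) \<circ> s) \<longlonglongrightarrow> a"
    unfolding seq_compact_def by blast
  define l' where "l' = (\<chi> j. if j = i then a else l $ j)"
  have "strict_mono (r \<circ> s)" using r s strict_mono_o by blast
  moreover have "\<forall>j\<in>insert i D. (\<lambda>k. f ((r \<circ> s) k) $ j) \<longlonglongrightarrow> l' $ j"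
  proof
    fix j assume j: "j \<in> insert i D"
    show "(\<lambda>k. f ((r \<circ> s) k) $ j) \<longlonglongrightarrow> l' $ j"
    proof (cases "j = i")
      case True then show ?thesis using as by (simp add: l'_def o_def)
    next
      case False
      then have "j \<in> D" using j by auto
      then have "((\<lambda>k. f (r k) $ j) \<circ> s) \<longlonglongrightarrow> l $ j" using lr s LIMSEQ_subseq_LIMSEQ by blast
      then show ?thesis using False by (simp add: l'_def o_def)
    qed
  qed
  ultimately show ?case by blast
qed

lemma compact_vec_UNIV:
  assumes cX: "compact (UNIV::'x::metric_space set)"
  shows "compact (UNIV :: ('x ^ 'n) set)"
  unfolding compact_eq_seq_compact_metric
proof (rule seq_compactI)
  fix f :: "nat \<Rightarrow> 'x ^ 'n"
  obtain l r where "strict_mono r" "\<forall>i\<in>UNIV. (\<lambda>k. f (r k) $ i) \<longlonglongrightarrow> l $ i"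
    using vec_subseq_aux[OF cX, of UNIV f] by auto
  then show "\<exists>l\<in>UNIV. \<exists>r. strict_mono r \<and> (f \<circ> r) \<longlonglongrightarrow> l"
    by (auto intro!: vec_tendstoI simp: o_def)
qed


lemma finite_net:
  assumes cX: "compact (UNIV::'b::metric_space set)" and e: "e > 0"
  shows "\<exists>L::'b list. \<forall>y. \<exists>t\<in>set L. dist t y < e"
proof -
  have "UNIV \<subseteq> (\<Union>t\<in>UNIV. ball t e)" using e by (auto intro: exI[of _ "_"]) 
  then obtain C :: "'b set" where "finite C" "UNIV \<subseteq> (\<Union>t\<in>C. ball t e)"
    using compactE_image[OF cX, of UNIV "\<lambda>t. ball t e"] by (metis open_ball)
  then obtain L where "set L = C" using finite_list by blast
  then show ?thesis using \<open>UNIV \<subseteq> (\<Union>t\<in>C. ball t e)\<close> by (auto simp: subset_eq)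
qed

lemma borel_selection:
  fixes \<Phi> :: "'a::topological_space \<Rightarrow> 'b::metric_space set"
  assumes cX: "compact (UNIV::'b set)"
    and ne: "\<And>w. \<Phi> w \<noteq> {}" and cl: "\<And>w. closed (\<Phi> w)"
    and meas: "\<And>K. closed K \<Longrightarrow> {w. \<Phi> w \<inter> K \<noteq> {}} \<in> sets borel"
  shows "\<exists>h. h \<in> borel_measurable borel \<and> (\<forall>w. h w \<in> \<Phi> w)"
proof -
  define e where "e = (\<lambda>k::nat. inverse (real (Suc k)))"
  have epos: "e k > 0" for k by (simp add: e_def)
  have "\<forall>k. \<exists>L::'b list. \<forall>y. \<exists>t\<in>set L. dist t y < e k"
    using finite_net[OF cX epos] by blast
  then have "\<exists>T. \<forall>k. \<forall>y::'b. \<exists>t\<in>set (T k). dist t y < e k" by (rule choice)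
  then obtain T :: "nat \<Rightarrow> 'b list" where T: "\<And>k (y::'b). \<exists>t\<in>set (T k). dist t y < e k" by blast
  define P where "P = (\<lambda>k S j. j < length (T k) \<and> S \<inter> cball (T k ! j) (e k) \<noteq> {})"
  define step where "step = (\<lambda>k S. S \<inter> cball (T k ! (LEAST j. P k S j)) (e k))"
  define \<Psi> where "\<Psi> = (\<lambda>k w. rec_nat (\<Phi> w) step k)"
  have \<Psi>0: "\<Psi> 0 w = \<Phi> w" for w by (simp add: \<Psi>_def)
  have \<Psi>S: "\<Psi> (Suc k) w = step k (\<Psi> k w)" for k w by (simp add: \<Psi>_def)
  have Pex: "\<exists>j. P k S j" if Sne: "S \<noteq> {}" for k S
  proof -
    obtain y where y: "y \<in> S" using Sne by blast
    obtain t where t: "t \<in> set (T k)" "dist t y < e k" using T by blast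
    then obtain j where "j < length (T k)" "T k ! j = t" by (auto simp: in_set_conv_nth)
    then show ?thesis using t y unfolding P_def by (auto intro!: exI[of _ j] simp: less_imp_le)
  qed
  have Pleast: "P k S (LEAST j. P k S j)" if "S \<noteq> {}" for k S
    using Pex[OF that] by (rule LeastI_ex)
  have step_ne: "step k S \<noteq> {}" if "S \<noteq> {}" for k S
    using Pleast[OF that] unfolding step_def P_def by blast
  have step_sub: "step k S \<subseteq> S" for k S unfolding step_def by blast
  have step_diam: "dist x y \<le> 2 * e k" if "x \<in> step k S" "y \<in> step k S" for k S x y
  proof -
    let ?c = "T k ! (LEAST j. P k S j)"
    have "dist ?c x \<le> e k" "dist ?c y \<le> e k" using that unfolding step_def by auto
    moreover have "dist x y \<le> dist ?c x + dist ?c y" by (rule dist_triangle3)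
    ultimately show ?thesis by linarith
  qed
  have \<Psi>ne: "\<Psi> k w \<noteq> {}" for k w by (induction k) (auto simp: \<Psi>0 \<Psi>S ne step_ne)
  have \<Psi>cl: "closed (\<Psi> k w)" for k w by (induction k) (auto simp: \<Psi>0 \<Psi>S cl step_def)
  have \<Psi>mono: "\<Psi> m w \<subseteq> \<Psi> n w" if "n \<le> m" for m n w
    using that
  proof (induction m)
    case 0 then show ?case by simp
  next
    case (Suc m)
    then show ?case using step_sub[of m "\<Psi> m w"] by (auto simp: \<Psi>S le_Suc_eq)
  qed
  have \<Psi>meas: "\<forall>K. closed K \<longrightarrow> {w. \<Psi> k w \<inter> K \<noteq> {}} \<in> sets borel" for k
  proof (induction k)
    case 0 then show ?case using meas by (simp add: \<Psi>0)
  next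
    case (Suc k)
    have IH: "{w. \<Psi> k w \<inter> K \<noteq> {}} \<in> sets borel" if "closed K" for K
      using Suc that by blast
    have A: "{w. P k (\<Psi> k w) j} \<in> sets borel" for j
    proof (cases "j < length (T k)")
      case True
      then have "{w. P k (\<Psi> k w) j} = {w. \<Psi> k w \<inter> cball (T k ! j) (e k) \<noteq> {}}"
        by (simp add: P_def)
      moreover have "{w. \<Psi> k w \<inter> cball (T k ! j) (e k) \<noteq> {}} \<in> sets borel"
        by (rule IH) simp
      ultimately show ?thesis by simp
    next
      case False then show ?thesis by (simp add: P_def)
    qed
    show ?case
    proof (intro allI impI)
      fix K :: "'b set" assume K: "closed K"
      define Q where "Q = (\<lambda>j. ({w. P k (\<Psi> k w) j} \<inter> (UNIV - (\<Union>i\<in>{..<j}. {w. P k (\<Psi> k w) i})))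
           \<inter> {w. \<Psi> k w \<inter> (cball (T k ! j) (e k) \<inter> K) \<noteq> {}})"
      have eq: "{w. \<Psi> (Suc k) w \<inter> K \<noteq> {}} = (\<Union>j\<in>{..<length (T k)}. Q j)"
      proof (intro equalityI subsetI)
        fix w assume w: "w \<in> {w. \<Psi> (Suc k) w \<inter> K \<noteq> {}}"
        define j where "j = (LEAST j. P k (\<Psi> k w) j)"
        have Pj: "P k (\<Psi> k w) j" unfolding j_def by (rule Pleast[OF \<Psi>ne])
        have nP: "\<not> P k (\<Psi> k w) i" if "i < j" for i using not_less_Least that unfolding j_def by blast
        have w3: "\<Psi> k w \<inter> (cball (T k ! j) (e k) \<inter> K) \<noteq> {}"
          using w by (simp add: \<Psi>S step_def j_def Int_assoc)
        have w2: "w \<notin> (\<Union>i\<in>{..<j}. {w. P k (\<Psi> k w) i})" using nP by blast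
        have "w \<in> Q j" unfolding Q_def using Pj w2 w3 by blast
        moreover have "j < length (T k)" using Pj by (simp add: P_def)
        ultimately show "w \<in> (\<Union>j\<in>{..<length (T k)}. Q j)" by blast
      next
        fix w assume "w \<in> (\<Union>j\<in>{..<length (T k)}. Q j)"
        then obtain j where j: "w \<in> Q j" by blast
        have L: "(LEAST j. P k (\<Psi> k w) j) = j"
        proof (rule Least_equality)
          show "P k (\<Psi> k w) j" using j by (simp add: Q_def)
          fix y assume Py: "P k (\<Psi> k w) y"
          show "j \<le> y"
          proof (rule ccontr)
            assume "\<not> j \<le> y"
            then have "y \<in> {..<j}" by simp
            then have "w \<in> (\<Union>i\<in>{..<j}. {w. P k (\<Psi> k w) i})" using Py by blast
            then show False using j unfolding Q_def by blast
          qed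
        qed
        have "\<Psi> (Suc k) w \<inter> K = \<Psi> k w \<inter> (cball (T k ! j) (e k) \<inter> K)"
          by (simp add: \<Psi>S step_def L Int_assoc)
        moreover have "\<Psi> k w \<inter> (cball (T k ! j) (e k) \<inter> K) \<noteq> {}" using j unfolding Q_def by blast
        ultimately show "w \<in> {w. \<Psi> (Suc k) w \<inter> K \<noteq> {}}" by simp
      qed
      have "Q j \<in> sets borel" for j
      proof -
        have B3: "{w. \<Psi> k w \<inter> (cball (T k ! j) (e k) \<inter> K) \<noteq> {}} \<in> sets borel"
          by (rule IH) (simp add: closed_Int K)
        have U: "(\<Union>i\<in>{..<j}. {w. P k (\<Psi> k w) i}) \<in> sets borel"
          by (rule sets.finite_UN) (simp_all add: A)
        have B2: "UNIV - (\<Union>i\<in>{..<j}. {w. P k (\<Psi> k w) i}) \<in> sets borel"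
          using sets.Diff[OF sets.top U] by simp
        show ?thesis unfolding Q_def by (intro sets.Int A B2 B3)
      qed
      then have "(\<Union>j\<in>{..<length (T k)}. Q j) \<in> sets borel"
        by (intro sets.finite_UN) simp_all
      then show "{w. \<Psi> (Suc k) w \<inter> K \<noteq> {}} \<in> sets borel" unfolding eq .
    qed
  qed
  have exs: "\<exists>x. \<forall>k. x \<in> \<Psi> k w" for w
  proof -
    have "UNIV \<inter> \<Inter>(range (\<lambda>k. \<Psi> k w)) \<noteq> {}"
    proof (rule compact_imp_fip[OF cX])
      show "\<And>T. T \<in> range (\<lambda>k. \<Psi> k w) \<Longrightarrow> closed T" using \<Psi>cl by auto
      fix F' assume F': "finite F'" "F' \<subseteq> range (\<lambda>k. \<Psi> k w)"
      then obtain N where N: "finite N" "F' = (\<lambda>k. \<Psi> k w) ` N" using finite_subset_image[OF F'(1) F'(2)] by auto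
      show "UNIV \<inter> \<Inter>F' \<noteq> {}"
      proof (cases "N = {}")
        case True then show ?thesis using N by simp
      next
        case False
        have "\<Psi> (Max N) w \<subseteq> \<Psi> k w" if "k \<in> N" for k
          using \<Psi>mono[of k "Max N" w] Max_ge[OF N(1) that] by blast
        then have "\<Psi> (Max N) w \<subseteq> \<Inter>F'" using N(2) by blast
        then show ?thesis using \<Psi>ne[of "Max N" w] by auto
      qed
    qed
    then obtain x where "x \<in> \<Inter>(range (\<lambda>k. \<Psi> k w))" by blast
    then show ?thesis by blast
  qed
  define h where "h = (\<lambda>w. SOME x. \<forall>k. x \<in> \<Psi> k w)"
  have hin: "h w \<in> \<Psi> k w" for w k using someI_ex[OF exs[of w]] unfolding h_def by blast
  have pre: "{w. h w \<in> K} = (\<Inter>k. {w. \<Psi> k w \<inter> K \<noteq> {}})" if K: "closed K" for K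
  proof (intro equalityI subsetI)
    fix w assume "w \<in> {w. h w \<in> K}" then show "w \<in> (\<Inter>k. {w. \<Psi> k w \<inter> K \<noteq> {}})"
      using hin by blast
  next
    fix w assume "w \<in> (\<Inter>k. {w. \<Psi> k w \<inter> K \<noteq> {}})"
    then have "\<forall>k. \<exists>y. y \<in> \<Psi> (Suc k) w \<inter> K" by blast
    then obtain y where y: "\<And>k. y k \<in> \<Psi> (Suc k) w \<inter> K" by metis
    have d: "dist (y k) (h w) \<le> 2 * e k" for k
    proof -
      have "y k \<in> step k (\<Psi> k w)" "h w \<in> step k (\<Psi> k w)"
        using y[of k] hin[of w "Suc k"] by (simp_all add: \<Psi>S)
      then show ?thesis by (rule step_diam)
    qed
    have "y \<longlonglongrightarrow> h w"
    proof (rule metric_LIMSEQ_I)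
      fix r :: real assume r: "r > 0"
      obtain n where n: "n > 0" "inverse (real n) < r / 2" using ex_inverse_of_nat_less[of "r/2"] r by auto
      show "\<exists>no. \<forall>k\<ge>no. dist (y k) (h w) < r"
      proof (intro exI allI impI)
        fix k assume "n \<le> k"
        then have "e k \<le> inverse (real n)" using n unfolding e_def
          by (simp add: le_imp_inverse_le)
        then show "dist (y k) (h w) < r" using d[of k] n by linarith
      qed
    qed
    then show "w \<in> {w. h w \<in> K}" using closed_sequential_limits K y by blast
  qed
  have "h \<in> measurable borel (sigma UNIV (Collect closed))"
  proof (rule measurable_measure_of)
    fix K :: "'b set" assume "K \<in> Collect closed"
    then have "h -` K = (\<Inter>k. {w. \<Psi> k w \<inter> K \<noteq> {}})" using pre by (auto simp: vimage_def)
    then show "h -` K \<inter> space borel \<in> sets borel" using \<Psi>meas \<open>K \<in> Collect closed\<close> by auto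
  qed auto
  then have "h \<in> borel_measurable borel" by (simp add: borel_eq_closed[where 'a='b])
  then show ?thesis using hin[of _ 0] \<Psi>0 by auto
qed


lemma empirical_eq:
  fixes w :: "'w::topological_space ^ 'n" and x :: "'x::topological_space ^ 'n"
  shows "empirical w x = distr (uniform_count_measure (UNIV::'n set)) borel (\<lambda>k. (w $ k, x $ k))"
    (is "_ = ?M")
proof -
  let ?f = "\<lambda>k. (w $ k, x $ k)"
  let ?\<mu> = "\<lambda>A. ennreal (real (card {k. (w $ k, x $ k) \<in> A}) / real CARD('n))"
  have meas: "?f \<in> measurable (uniform_count_measure (UNIV::'n set)) borel"
    by (auto simp: measurable_def sets_uniform_count_measure space_uniform_count_measure)
  have em: "emeasure ?M A = ?\<mu> A" if "A \<in> sets borel" for A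
  proof -
    have "emeasure ?M A = emeasure (uniform_count_measure (UNIV::'n set)) (?f -` A)"
      using emeasure_distr[OF meas that] by (simp add: space_uniform_count_measure)
    also have "\<dots> = ?\<mu> A"
      by (simp add: emeasure_uniform_count_measure vimage_def)
    finally show ?thesis .
  qed
  have sig: "sigma_sets UNIV (sets borel) = sets (borel :: ('w \<times> 'x) measure)"
    using sets.sigma_sets_eq[of "borel :: ('w \<times> 'x) measure"] by simp
  have ms: "measure_space UNIV (sigma_sets UNIV (sets borel)) ?\<mu> =
      measure_space UNIV (sigma_sets UNIV (sets (borel :: ('w \<times> 'x) measure))) (emeasure ?M)"
    by (rule measure_space_eq) (auto simp: sig em)
  have ms': "measure_space UNIV (sets borel) ?\<mu> =
      measure_space UNIV (sets (borel :: ('w \<times> 'x) measure)) (emeasure ?M)"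
    using ms by (simp only: sig)
  have "empirical w x = measure_of UNIV (sets borel) (emeasure ?M)"
    unfolding empirical_def measure_of_def
    by (rule arg_cong[where f=Abs_measure]) (auto simp: ms' sig em intro!: ext)
  also have "\<dots> = ?M"
    using measure_of_of_measure[of ?M] by simp
  finally show ?thesis .
qed

lemma empirical_prob:
  fixes w :: "'w::topological_space ^ 'n" and x :: "'x::topological_space ^ 'n"
  shows "empirical w x \<in> prob_measures"
proof -
  have meas: "(\<lambda>k. (w $ k, x $ k)) \<in> measurable (uniform_count_measure (UNIV::'n set)) borel"
    by (auto simp: measurable_def sets_uniform_count_measure space_uniform_count_measure)
  have "prob_space (uniform_count_measure (UNIV::'n set))"
    by (rule prob_space_uniform_count_measure) simp_all
  then have "prob_space (empirical w x)"
    unfolding empirical_eq using meas by (rule prob_space.prob_space_distr)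
  then show ?thesis unfolding prob_measures_def by (simp add: empirical_eq)
qed

lemma empirical_integral:
  fixes w :: "'w::topological_space ^ 'n" and x :: "'x::topological_space ^ 'n"
    and f :: "'w \<times> 'x \<Rightarrow> real"
  assumes f: "f \<in> borel_measurable borel"
  shows "(\<integral>z. f z \<partial>empirical w x) = (\<Sum>k\<in>UNIV. f (w $ k, x $ k)) / real CARD('n)"
proof -
  have meas: "(\<lambda>k. (w $ k, x $ k)) \<in> measurable (uniform_count_measure (UNIV::'n set)) borel"
    by (auto simp: measurable_def sets_uniform_count_measure space_uniform_count_measure)
  show ?thesis unfolding empirical_eq
    by (simp add: integral_distr[OF meas f] integral_uniform_count_measure)
qed

lemma empirical_cont:
  "continuous_map euclidean weak_topology
     (\<lambda>p::('w::topological_space ^ 'n) \<times> ('x::topological_space ^ 'n). empirical (fst p) (snd p))"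
  unfolding weak_topology_def
proof (rule continuous_on_generated_topo)
  fix U assume "U \<in> {{M \<in> prob_measures. (\<integral>z. f z \<partial>M) \<in> U} | (f :: 'w \<times> 'x \<Rightarrow> real) U.
        continuous_on UNIV f \<and> bounded (range f) \<and> open U}"
  then obtain f :: "'w \<times> 'x \<Rightarrow> real" and V where U: "U = {M \<in> prob_measures. (\<integral>z. f z \<partial>M) \<in> V}"
    and f: "continuous_on UNIV f" and V: "open V" by blast
  have fm: "f \<in> borel_measurable borel" using f by (rule borel_measurable_continuous_onI)
  have eq: "(\<lambda>p::('w ^ 'n) \<times> ('x ^ 'n). empirical (fst p) (snd p)) -` U \<inter> topspace euclidean
      = (\<lambda>p. (\<Sum>k\<in>UNIV. f (fst p $ k, snd p $ k)) / real CARD('n)) -` V"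
    using empirical_prob by (auto simp: U empirical_integral[OF fm])
  have c: "continuous_on UNIV (\<lambda>p::('w ^ 'n) \<times> ('x ^ 'n). (\<Sum>k\<in>UNIV. f (fst p $ k, snd p $ k)) / real CARD('n))"
    by (intro continuous_intros continuous_on_compose2[OF f]) auto
  have "open ((\<lambda>p::('w ^ 'n) \<times> ('x ^ 'n). (\<Sum>k\<in>UNIV. f (fst p $ k, snd p $ k)) / real CARD('n)) -` V)"
    using c V by (simp add: continuous_on_open_vimage[OF open_UNIV])
  then show "openin euclidean ((\<lambda>p::('w ^ 'n) \<times> ('x ^ 'n). empirical (fst p) (snd p)) -` U \<inter> topspace euclidean)"
    unfolding eq by simp
next
  show "(\<lambda>p::('w ^ 'n) \<times> ('x ^ 'n). empirical (fst p) (snd p)) ` topspace euclidean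
     \<subseteq> \<Union> {{M \<in> prob_measures. (\<integral>z. f z \<partial>M) \<in> U} | (f :: 'w \<times> 'x \<Rightarrow> real) U.
        continuous_on UNIV f \<and> bounded (range f) \<and> open U}"
  proof
    fix M assume "M \<in> (\<lambda>p::('w ^ 'n) \<times> ('x ^ 'n). empirical (fst p) (snd p)) ` topspace euclidean"
    then have M: "M \<in> prob_measures" using empirical_prob by auto
    have "{M \<in> prob_measures. (\<integral>z. (\<lambda>_. 0::real) z \<partial>M) \<in> UNIV} \<in> {{M \<in> prob_measures. (\<integral>z. f z \<partial>M) \<in> U} | (f :: 'w \<times> 'x \<Rightarrow> real) U.
        continuous_on UNIV f \<and> bounded (range f) \<and> open U}"
      by (intro CollectI exI[of _ "\<lambda>_. 0::real"] exI[of _ UNIV]) auto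
    then show "M \<in> \<Union> {{M \<in> prob_measures. (\<integral>z. f z \<partial>M) \<in> U} | (f :: 'w \<times> 'x \<Rightarrow> real) U.
        continuous_on UNIV f \<and> bounded (range f) \<and> open U}" using M by blast
  qed
qed

lemma F_seq:
  fixes F :: "('w::topological_space \<times> 'x::topological_space) measure \<Rightarrow> 'w \<Rightarrow> 'x \<Rightarrow> real"
    and u :: "nat \<Rightarrow> 'w ^ 'n" and v :: "nat \<Rightarrow> 'x ^ 'n"
  assumes F_cont: "continuous_map (prod_topology weak_topology (prod_topology euclidean euclidean))
        euclideanreal (\<lambda>(m, w, x). F m w x)"
    and u: "u \<longlonglongrightarrow> u0" and v: "v \<longlonglongrightarrow> v0" and a: "a \<longlonglongrightarrow> a0" and b: "b \<longlonglongrightarrow> b0"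
  shows "(\<lambda>k. F (empirical (u k) (v k)) (a k) (b k)) \<longlonglongrightarrow> F (empirical u0 v0) a0 b0"
proof -
  define \<Gamma> where "\<Gamma> = (\<lambda>p::((('w ^ 'n) \<times> ('x ^ 'n)) \<times> ('w \<times> 'x)).
      (empirical (fst (fst p)) (snd (fst p)), fst (snd p), snd (snd p)))"
  have c1: "continuous_map euclidean weak_topology
     (\<lambda>p::((('w ^ 'n) \<times> ('x ^ 'n)) \<times> ('w \<times> 'x)). empirical (fst (fst p)) (snd (fst p)))"
  proof -
    have "continuous_map euclidean euclidean (fst :: ((('w ^ 'n) \<times> ('x ^ 'n)) \<times> ('w \<times> 'x)) \<Rightarrow> _)"
      by (simp add: continuous_on_fst continuous_on_id)
    from continuous_map_compose[OF this empirical_cont] show ?thesis by (simp add: o_def)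
  qed
  have c2: "continuous_map euclidean (prod_topology euclidean euclidean)
     (\<lambda>p::((('w ^ 'n) \<times> ('x ^ 'n)) \<times> ('w \<times> 'x)). (fst (snd p), snd (snd p)))"
    by (intro continuous_map_pairedI) (simp_all add: continuous_intros)
  have "continuous_map euclidean (prod_topology weak_topology (prod_topology euclidean euclidean)) \<Gamma>"
    unfolding \<Gamma>_def using c1 c2 by (rule continuous_map_pairedI)
  from continuous_map_compose[OF this F_cont]
  have "continuous_on UNIV ((\<lambda>(m, w, x). F m w x) \<circ> \<Gamma>)" by simp
  then have cG: "continuous_on UNIV (\<lambda>p::((('w ^ 'n) \<times> ('x ^ 'n)) \<times> ('w \<times> 'x)). F (empirical (fst (fst p)) (snd (fst p))) (fst (snd p)) (snd (snd p)))"
    by (simp add: \<Gamma>_def o_def case_prod_beta)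
  have lim: "(\<lambda>k. ((u k, v k), (a k, b k))) \<longlonglongrightarrow> ((u0, v0), (a0, b0))"
    by (intro tendsto_Pair u v a b)
  show ?thesis
    using continuous_on_tendsto_compose[OF cG lim] by simp
qed


lemma F_bdd_below:
  fixes F :: "('w::topological_space \<times> 'x::topological_space) measure \<Rightarrow> 'w \<Rightarrow> 'x \<Rightarrow> real"
  assumes F_bounded: "\<exists>B. \<forall>m \<in> prob_measures. \<forall>w x. \<bar>F m w x\<bar> \<le> B"
  shows "bdd_below ((\<lambda>y. F (empirical (u :: 'w ^ 'n) (g y :: 'x ^ 'n)) a y) ` S)"
proof -
  obtain B where B: "\<forall>m \<in> prob_measures. \<forall>w x. \<bar>F m w x\<bar> \<le> B" using F_bounded by blast
  show ?thesis
  proof (rule bdd_belowI2)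
    fix y
    have "\<bar>F (empirical u (g y)) a y\<bar> \<le> B" using B empirical_prob by blast
    then show "- B \<le> F (empirical u (g y)) a y" by linarith
  qed
qed

lemma nash_limit:
  fixes C :: "'w::polish_space \<Rightarrow> 'x::metric_space set"
    and F :: "('w \<times> 'x) measure \<Rightarrow> 'w \<Rightarrow> 'x \<Rightarrow> real"
    and ws :: "nat \<Rightarrow> 'w ^ 'n" and xs :: "nat \<Rightarrow> 'x ^ 'n"
  assumes C_nonempty: "\<And>w. C w \<noteq> {}"
    and C_graph_closed: "closed {(w, x). x \<in> C w}"
    and C_lower: "\<And>ws w x. ws \<longlonglongrightarrow> w \<Longrightarrow> x \<in> C w \<Longrightarrow>
        \<exists>r xs. strict_mono r \<and> (\<forall>k. xs k \<in> C (ws (r k))) \<and> xs \<longlonglongrightarrow> x"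
    and F_bounded: "\<exists>B. \<forall>m \<in> prob_measures. \<forall>w x. \<bar>F m w x\<bar> \<le> B"
    and F_cont: "continuous_map (prod_topology weak_topology (prod_topology euclidean euclidean))
        euclideanreal (\<lambda>(m, w, x). F m w x)"
    and wl: "ws \<longlonglongrightarrow> w" and xl: "xs \<longlonglongrightarrow> x"
    and N: "\<And>k. xs k \<in> nash eps C F (ws k)"
  shows "x \<in> nash eps C F w"
proof -
  have N1: "xs k $ i \<in> C (ws k $ i)" for k i using N[of k] by (simp add: nash_def)
  have N2: "F (empirical (ws k) (xs k)) (ws k $ i) (xs k $ i)
          - (INF y\<in>C (ws k $ i). F (empirical (ws k) (vupd (xs k) i y)) (ws k $ i) y) \<le> eps" for k i
    using N[of k] by (simp add: nash_def)
  have wi: "(\<lambda>k. ws k $ i) \<longlonglongrightarrow> w $ i" for i using wl by (rule tendsto_vec_nth)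
  have xi: "(\<lambda>k. xs k $ i) \<longlonglongrightarrow> x $ i" for i using xl by (rule tendsto_vec_nth)
  have c1: "x $ i \<in> C (w $ i)" for i
  proof -
    have lim: "(\<lambda>k. (ws k $ i, xs k $ i)) \<longlonglongrightarrow> (w $ i, x $ i)" by (intro tendsto_Pair wi xi)
    have mem: "(ws k $ i, xs k $ i) \<in> {(w, x). x \<in> C w}" for k using N1 by simp
    have "(w $ i, x $ i) \<in> {(w, x). x \<in> C w}"
      by (rule closed_sequentially[OF C_graph_closed mem lim])
    then show ?thesis by simp
  qed
  have c2: "F (empirical w x) (w $ i) (x $ i)
          - (INF y\<in>C (w $ i). F (empirical w (vupd x i y)) (w $ i) y) \<le> eps" for i
  proof -
    have "F (empirical w x) (w $ i) (x $ i) - eps \<le> (INF y\<in>C (w $ i). F (empirical w (vupd x i y)) (w $ i) y)"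
    proof (rule cINF_greatest)
      show "C (w $ i) \<noteq> {}" by (rule C_nonempty)
      fix y assume y: "y \<in> C (w $ i)"
      obtain r ys where r: "strict_mono r" and ys: "\<And>k. ys k \<in> C (ws (r k) $ i)" and yl: "ys \<longlonglongrightarrow> y"
        using C_lower[OF wi y] by blast
      have wr: "(\<lambda>k. ws (r k)) \<longlonglongrightarrow> w" using LIMSEQ_subseq_LIMSEQ[OF wl r] by (simp add: o_def)
      have xr: "(\<lambda>k. xs (r k)) \<longlonglongrightarrow> x" using LIMSEQ_subseq_LIMSEQ[OF xl r] by (simp add: o_def)
      have A: "(\<lambda>k. F (empirical (ws (r k)) (xs (r k))) (ws (r k) $ i) (xs (r k) $ i))
          \<longlonglongrightarrow> F (empirical w x) (w $ i) (x $ i)"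
        by (rule F_seq[OF F_cont wr xr]) (intro tendsto_vec_nth wr xr)+
      have vl: "(\<lambda>k. vupd (xs (r k)) i (ys k)) \<longlonglongrightarrow> vupd x i y"
        unfolding vupd_def
      proof (intro tendsto_vec_lambda)
        fix j
        show "(\<lambda>k. if j = i then ys k else xs (r k) $ j) \<longlonglongrightarrow> (if j = i then y else x $ j)"
        proof (cases "j = i")
          case True then show ?thesis using yl by simp
        next
          case False then show ?thesis using tendsto_vec_nth[OF xr, of j] by simp
        qed
      qed
      have B: "(\<lambda>k. F (empirical (ws (r k)) (vupd (xs (r k)) i (ys k))) (ws (r k) $ i) (ys k))
          \<longlonglongrightarrow> F (empirical w (vupd x i y)) (w $ i) y"
        by (rule F_seq[OF F_cont wr vl]) (intro tendsto_vec_nth wr yl)+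
      have le: "F (empirical (ws (r k)) (xs (r k))) (ws (r k) $ i) (xs (r k) $ i)
           - F (empirical (ws (r k)) (vupd (xs (r k)) i (ys k))) (ws (r k) $ i) (ys k) \<le> eps" for k
      proof -
        have "(INF y\<in>C (ws (r k) $ i). F (empirical (ws (r k)) (vupd (xs (r k)) i y)) (ws (r k) $ i) y)
            \<le> F (empirical (ws (r k)) (vupd (xs (r k)) i (ys k))) (ws (r k) $ i) (ys k)"
          by (rule cINF_lower[OF F_bdd_below[OF F_bounded] ys])
        then show ?thesis using N2[of "r k" i] by linarith
      qed
      have "F (empirical w x) (w $ i) (x $ i) - F (empirical w (vupd x i y)) (w $ i) y \<le> eps"
        by (rule LIMSEQ_le_const2[OF tendsto_diff[OF A B]]) (use le in blast)
      then show "F (empirical w x) (w $ i) (x $ i) - eps \<le> F (empirical w (vupd x i y)) (w $ i) y"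
        by linarith
    qed
    then show ?thesis by linarith
  qed
  show ?thesis using c1 c2 by (simp add: nash_def)
qed


lemma nash_closed_K:
  fixes C :: "'w::polish_space \<Rightarrow> 'x::metric_space set"
    and F :: "('w \<times> 'x) measure \<Rightarrow> 'w \<Rightarrow> 'x \<Rightarrow> real"
    and K :: "('x ^ 'n) set"
  assumes X_compact: "compact (UNIV :: 'x set)"
    and C_nonempty: "\<And>w. C w \<noteq> {}"
    and C_graph_closed: "closed {(w, x). x \<in> C w}"
    and C_lower: "\<And>ws w x. ws \<longlonglongrightarrow> w \<Longrightarrow> x \<in> C w \<Longrightarrow>
        \<exists>r xs. strict_mono r \<and> (\<forall>k. xs k \<in> C (ws (r k))) \<and> xs \<longlonglongrightarrow> x"
    and F_bounded: "\<exists>B. \<forall>m \<in> prob_measures. \<forall>w x. \<bar>F m w x\<bar> \<le> B"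
    and F_cont: "continuous_map (prod_topology weak_topology (prod_topology euclidean euclidean))
        euclideanreal (\<lambda>(m, w, x). F m w x)"
    and K: "closed K"
  shows "closed {w :: 'w ^ 'n. nash eps C F w \<inter> K \<noteq> {}}"
  unfolding closed_sequential_limits
proof (intro allI impI, elim conjE)
  fix ws :: "nat \<Rightarrow> 'w ^ 'n" and w
  assume ws: "\<forall>n. ws n \<in> {w. nash eps C F w \<inter> K \<noteq> {}}" and wl: "ws \<longlonglongrightarrow> w"
  have "\<forall>n. \<exists>x. x \<in> nash eps C F (ws n) \<inter> K" using ws by blast
  then obtain xs where xs: "\<And>n. xs n \<in> nash eps C F (ws n) \<inter> K" by metis
  have "compact (UNIV :: ('x ^ 'n) set)" by (rule compact_vec_UNIV[OF X_compact])
  then have "seq_compact (UNIV :: ('x ^ 'n) set)" by (simp add: compact_eq_seq_compact_metric)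
  then obtain x r where r: "strict_mono r" and xl: "(xs \<circ> r) \<longlonglongrightarrow> x"
    unfolding seq_compact_def by blast
  have wr: "(ws \<circ> r) \<longlonglongrightarrow> w" using LIMSEQ_subseq_LIMSEQ[OF wl r] .
  have "x \<in> nash eps C F w"
    by (rule nash_limit[OF C_nonempty C_graph_closed C_lower F_bounded F_cont wr xl])
      (use xs in auto)
  moreover have "x \<in> K"
    by (rule closed_sequentially[OF K _ xl]) (use xs in auto)
  ultimately show "w \<in> {w. nash eps C F w \<inter> K \<noteq> {}}" by blast
qed

theorem lemma3p4:
  fixes C :: "'w::polish_space \<Rightarrow> 'x::metric_space set"
    and F :: "('w \<times> 'x) measure \<Rightarrow> 'w \<Rightarrow> 'x \<Rightarrow> real"
    and eps :: real
  assumes X_compact: "compact (UNIV :: 'x set)"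
    and C_nonempty: "\<And>w. C w \<noteq> {}"
    and C_closed: "\<And>w. closed (C w)"
    and C_graph_closed: "closed {(w, x). x \<in> C w}"
    and C_lower: "\<And>ws w x. ws \<longlonglongrightarrow> w \<Longrightarrow> x \<in> C w \<Longrightarrow>
        \<exists>r xs. strict_mono r \<and> (\<forall>k. xs k \<in> C (ws (r k))) \<and> xs \<longlonglongrightarrow> x"
    and F_bounded: "\<exists>B. \<forall>m \<in> prob_measures. \<forall>w x. \<bar>F m w x\<bar> \<le> B"
    and F_cont: "continuous_map (prod_topology weak_topology (prod_topology euclidean euclidean))
        euclideanreal (\<lambda>(m, w, x). F m w x)"
    and eps: "eps \<ge> 0"
  shows "closed (nash_domain eps C F :: ('w ^ 'n) set) \<and>
    (\<exists>h :: 'w ^ 'n \<Rightarrow> 'x ^ 'n.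
        (\<forall>w \<in> nash_domain eps C F. h w \<in> nash eps C F w) \<and>
        univ_measurable_on (nash_domain eps C F :: ('w ^ 'n) set) h)"
proof -
  let ?N = "\<lambda>w :: 'w ^ 'n. nash eps C F w"
  let ?D = "nash_domain eps C F :: ('w ^ 'n) set"
  have cK: "closed {w :: 'w ^ 'n. ?N w \<inter> K \<noteq> {}}" if "closed K" for K :: "('x ^ 'n) set"
    by (rule nash_closed_K[OF X_compact C_nonempty C_graph_closed C_lower F_bounded F_cont that])
  have Deq: "?D = {w. ?N w \<inter> UNIV \<noteq> {}}" by (simp add: nash_domain_def)
  have clD: "closed ?D" unfolding Deq by (rule cK) simp
  have clN: "closed (?N w)" for w
    unfolding closed_sequential_limits
  proof (intro allI impI, elim conjE)
    fix xs l assume xs: "\<forall>n. xs n \<in> ?N w" and xl: "xs \<longlonglongrightarrow> l"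
    show "l \<in> ?N w"
      by (rule nash_limit[OF C_nonempty C_graph_closed C_lower F_bounded F_cont tendsto_const xl])
        (use xs in auto)
  qed
  define \<Phi> where "\<Phi> = (\<lambda>w. if ?N w \<noteq> {} then ?N w else UNIV)"
  have \<Phi>ne: "\<Phi> w \<noteq> {}" for w by (simp add: \<Phi>_def)
  have \<Phi>cl: "closed (\<Phi> w)" for w by (simp add: \<Phi>_def clN)
  have \<Phi>meas: "{w. \<Phi> w \<inter> K \<noteq> {}} \<in> sets borel" if K: "closed K" for K
  proof (cases "K = {}")
    case True then show ?thesis by simp
  next
    case False
    have "{w. \<Phi> w \<inter> K \<noteq> {}} = {w. ?N w \<inter> K \<noteq> {}} \<union> (UNIV - ?D)"
      using False by (auto simp: \<Phi>_def nash_domain_def)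
    moreover have "{w. ?N w \<inter> K \<noteq> {}} \<in> sets borel" using cK[OF K] by (rule borel_closed)
    moreover have "UNIV - ?D \<in> sets borel" using clD by (simp add: borel_open open_Diff)
    ultimately show ?thesis by simp
  qed
  obtain h :: "'w ^ 'n \<Rightarrow> 'x ^ 'n" where hm: "h \<in> borel_measurable borel" and hin: "\<And>w. h w \<in> \<Phi> w"
    using borel_selection[OF compact_vec_UNIV[OF X_compact] \<Phi>ne \<Phi>cl \<Phi>meas] by blast
  have sel: "\<forall>w \<in> ?D. h w \<in> ?N w"
  proof
    fix w assume "w \<in> ?D"
    then have "?N w \<noteq> {}" by (simp add: nash_domain_def)
    then show "h w \<in> ?N w" using hin[of w] by (simp add: \<Phi>_def)
  qed
  have um: "univ_measurable_on ?D h"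
    unfolding univ_measurable_on_def univ_measurable_sets_def
  proof (intro ballI CollectI conjI allI impI)
    fix B :: "('x ^ 'n) set" assume B: "B \<in> sets borel"
    show "{v \<in> ?D. h v \<in> B} \<subseteq> ?D" by blast
    fix M assume M: "prob_space M \<and> sets M = sets (restrict_space borel ?D)"
    have "h -` B \<in> sets borel" using measurable_sets[OF hm B] by simp
    then have "?D \<inter> h -` B \<in> sets (restrict_space borel ?D)"
      by (auto simp: sets_restrict_space)
    moreover have "{v \<in> ?D. h v \<in> B} = ?D \<inter> h -` B" by blast
    ultimately have "{v \<in> ?D. h v \<in> B} \<in> sets M" using M by simp
    then show "{v \<in> ?D. h v \<in> B} \<in> sets (completion M)" by (rule sets_completionI_sets)
  qed
  show ?thesis using clD sel um by blast
qed

end
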